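(* Assume (A1)–(A4). Then $T(x)<T^*$ for all $x\in B_{R^*}$.
   Context: Let $p>1$ and $\mu>0$ with $p<1+2/\mu$, and let $R^*,T^*>0$. Write $B_R=\{x\in\mathbb{R}:|x|<R\}$. Fix $\gamma_1,\gamma_2>0$ with $\gamma_1+\gamma_2>\max\big(1,(\mu p 2^p)^{1/(p-1)}\big)$ and let $T_1=\frac{1}{(p-1)\mu}\ln\Big(\frac{2^{1-p}/\mu}{2^{1-p}/\mu-(\gamma_1+\gamma_2)^{1-p}}\Big)$, the finite blow-up time of the solution of $\hat\phi'=\hat\psi'=2^{-p}|\hat\phi+\hat\psi|^p-\frac{\mu}{2}(\hat\phi+\hat\psi)$, $\hat\phi(0)=\gamma_1$, $\hat\psi(0)=\gamma_2$. Assumptions on the real functions $f,g$: (A1) $T_1<T^*$. (A2) $f\ge\gamma_1$, $g\ge\gamma_2$ on $B_{R^*+T^*}$. (A3) $f,g\in\mathcal{C}^4(\overline{B_{R^*+T^*}})$. (A4) There is $\varepsilon_0>0$ with $2^{-p}(\gamma_1+\gamma_2)^p-\frac{\mu}{2}(\gamma_1+\gamma_2)\ge(2+\varepsilon_0)\max_{x\in B_{R^*+T^*}}(|f'(x)|+|g'(x)|)$. Let $K_{R^*,T^*}=\{(x,t):t>0,\ |x-x_0|<T^*-t\ \text{for some } x_0\in B_{R^*}\}$. Define iterates $\phi_0\equiv\gamma_1$, $\psi_0\equiv\gamma_2$ and, with $\mathcal{N}_n(x,s)=2^{-p}|\phi_n+\psi_n|^p(x,s)-\frac{\mu}{1+s}\frac{(\phi_n+\psi_n)(x,s)}{2}$,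 $\phi_{n+1}(x,t)=f(x+t)+\int_0^t\mathcal{N}_n(x+t-s,s)\,ds$, $\psi_{n+1}(x,t)=g(x-t)+\int_0^t\mathcal{N}_n(x-t+s,s)\,ds$. Set $\phi=\sup_n\phi_n$, $\psi=\sup_n\psi_n$ on $K_{R^*,T^*}$, and let $T(x)$, $x\in B_{R^*}$, be the blow-up time of $\phi+\psi$ at $x$, i.e. the supremum of $t>0$ such that $(\phi+\psi)(x,\tau)<\infty$ for $\tau<t$. *)

theory Defs
  imports "HOL-Analysis.Analysis"
begin

definition Ck_on :: "nat \<Rightarrow> real set \<Rightarrow> (real \<Rightarrow> real) \<Rightarrow> bool" where
  "Ck_on k S f \<longleftrightarrow> (\<exists>D :: nat \<Rightarrow> real \<Rightarrow> real.
      (\<forall>x\<in>S. D 0 x = f x) \<and>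
      (\<forall>j<k. \<forall>x\<in>S. (D j has_real_derivative D (Suc j) x) (at x within S)) \<and>
      continuous_on S (D k))"

definition coneK :: "real \<Rightarrow> real \<Rightarrow> (real \<times> real) set" where
  "coneK Rs Ts = {(x, t). t > 0 \<and> (\<exists>x0. \<bar>x0\<bar> < Rs \<and> \<bar>x - x0\<bar> < Ts - t)}"

definition nonlin :: "real \<Rightarrow> real \<Rightarrow> (real \<Rightarrow> real \<Rightarrow> real) \<Rightarrow> (real \<Rightarrow> real \<Rightarrow> real)
    \<Rightarrow> real \<Rightarrow> real \<Rightarrow> real" where
  "nonlin p \<mu> \<phi> \<psi> x s =
     2 powr (-p) * \<bar>\<phi> x s + \<psi> x s\<bar> powr p - \<mu> / (1 + s) * ((\<phi> x s + \<psi> x s) / 2)"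

fun iter :: "real \<Rightarrow> real \<Rightarrow> (real \<Rightarrow> real) \<Rightarrow> (real \<Rightarrow> real) \<Rightarrow> real \<Rightarrow> real \<Rightarrow> nat
    \<Rightarrow> (real \<Rightarrow> real \<Rightarrow> real) \<times> (real \<Rightarrow> real \<Rightarrow> real)" where
  "iter p \<mu> f g \<gamma>1 \<gamma>2 0 = ((\<lambda>x t. \<gamma>1), (\<lambda>x t. \<gamma>2))"
| "iter p \<mu> f g \<gamma>1 \<gamma>2 (Suc n) =
     (let \<phi> = fst (iter p \<mu> f g \<gamma>1 \<gamma>2 n); \<psi> = snd (iter p \<mu> f g \<gamma>1 \<gamma>2 n) in
      ((\<lambda>x t. f (x + t) + integral {0..t} (\<lambda>s. nonlin p \<mu> \<phi> \<psi> (x + t - s) s)),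
       (\<lambda>x t. g (x - t) + integral {0..t} (\<lambda>s. nonlin p \<mu> \<phi> \<psi> (x - t + s) s))))"

definition phi_lim :: "real \<Rightarrow> real \<Rightarrow> (real \<Rightarrow> real) \<Rightarrow> (real \<Rightarrow> real) \<Rightarrow> real \<Rightarrow> real
    \<Rightarrow> real \<Rightarrow> real \<Rightarrow> ereal" where
  "phi_lim p \<mu> f g \<gamma>1 \<gamma>2 x t = (SUP n. ereal (fst (iter p \<mu> f g \<gamma>1 \<gamma>2 n) x t))"

definition psi_lim :: "real \<Rightarrow> real \<Rightarrow> (real \<Rightarrow> real) \<Rightarrow> (real \<Rightarrow> real) \<Rightarrow> real \<Rightarrow> real
    \<Rightarrow> real \<Rightarrow> real \<Rightarrow> ereal" where
  "psi_lim p \<mu> f g \<gamma>1 \<gamma>2 x t = (SUP n. ereal (snd (iter p \<mu> f g \<gamma>1 \<gamma>2 n) x t))"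

definition blowup_time :: "real \<Rightarrow> real \<Rightarrow> real \<Rightarrow> real \<Rightarrow> (real \<Rightarrow> real) \<Rightarrow> (real \<Rightarrow> real)
    \<Rightarrow> real \<Rightarrow> real \<Rightarrow> real \<Rightarrow> ereal" where
  "blowup_time Rs Ts p \<mu> f g \<gamma>1 \<gamma>2 x =
     Sup (ereal ` {t. t > 0 \<and> (\<forall>\<tau>. 0 < \<tau> \<and> \<tau> < t \<longrightarrow>
          (x, \<tau>) \<in> coneK Rs Ts \<and>
          phi_lim p \<mu> f g \<gamma>1 \<gamma>2 x \<tau> + psi_lim p \<mu> f g \<gamma>1 \<gamma>2 x \<tau> < \<infinity>)})"

definition T1 :: "real \<Rightarrow> real \<Rightarrow> real \<Rightarrow> real \<Rightarrow> real" where
  "T1 p \<mu> \<gamma>1 \<gamma>2 = 1 / ((p - 1) * \<mu>) *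
     ln ((2 powr (1 - p) / \<mu>) / (2 powr (1 - p) / \<mu> - (\<gamma>1 + \<gamma>2) powr (1 - p)))"

end

theory Submission
  imports Defs
begin

definition Dom :: "real \<Rightarrow> (real \<times> real) set" where
  "Dom c = {z. 0 \<le> snd z \<and> \<bar>fst z\<bar> + snd z < c}"

lemma path_in_Dom:
  assumes "z \<in> Dom c" "s \<in> {0..snd z}" "\<bar>e\<bar> \<le> 1"
  shows "(fst z + e * (snd z - s), s) \<in> Dom c"
proof -
  have "\<bar>e * (snd z - s)\<bar> \<le> snd z - s"
    using assms(2,3) by (auto simp: abs_mult intro: mult_left_le_one_le)
  then show ?thesis using assms unfolding Dom_def by auto
qed

lemma integrand_cont:
  fixes K :: "real \<Rightarrow> real \<Rightarrow> real"
  assumes K: "continuous_on (Dom c) (\<lambda>w. K (fst w) (snd w))"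
    and z: "z \<in> Dom c" and e: "\<bar>e\<bar> \<le> 1"
  shows "continuous_on {0..snd z} (\<lambda>s. K (fst z + e * (snd z - s)) s)"
proof -
  have "continuous_on {0..snd z} (\<lambda>s. (\<lambda>w. K (fst w) (snd w)) (fst z + e * (snd z - s), s))"
    by (rule continuous_on_compose2[OF K]) (auto intro!: continuous_intros path_in_Dom[OF z _ e])
  then show ?thesis by simp
qed

lemma integral_rescale:
  fixes h :: "real \<Rightarrow> real"
  assumes "t \<ge> 0"
  shows "integral {0..t} h = t * integral {0..1} (\<lambda>\<sigma>. h (t * \<sigma>))"
proof (cases "t = 0")
  case True then show ?thesis by simp
next
  case False
  then have tp: "t > 0" using assms by simp
  have img: "(\<lambda>x. x / t) ` {0..t} = {0..1}"
  proof
    show "(\<lambda>x. x / t) ` {0..t} \<subseteq> {0..1}" using tp by (auto simp: field_simps)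
    show "{0..1} \<subseteq> (\<lambda>x. x / t) ` {0..t}"
    proof
      fix y :: real assume "y \<in> {0..1}"
      then have "t * y \<in> {0..t}" "y = (t * y) / t" using tp by (auto simp: mult_le_cancel_left1)
      then show "y \<in> (\<lambda>x. x / t) ` {0..t}" by blast
    qed
  qed
  have "integral {0..1} (\<lambda>\<sigma>. h (t * \<sigma>)) = (1 / \<bar>t\<bar>) * integral {0..t} h"
    using integral_stretch_real[of t 0 t h] False img by simp
  then show ?thesis using tp by simp
qed

lemma integral_char_cont:
  fixes K :: "real \<Rightarrow> real \<Rightarrow> real"
  assumes K: "continuous_on (Dom c) (\<lambda>w. K (fst w) (snd w))"
    and e: "\<bar>e\<bar> \<le> 1"
  shows "continuous_on (Dom c) (\<lambda>z. integral {0..snd z} (\<lambda>s. K (fst z + e * (snd z - s)) s))"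
proof -
  have eq: "integral {0..snd z} (\<lambda>s. K (fst z + e * (snd z - s)) s)
      = snd z * integral (cbox (0::real) 1) (\<lambda>\<sigma>. K (fst z + e * (snd z - snd z * \<sigma>)) (snd z * \<sigma>))"
    if "z \<in> Dom c" for z
    using that integral_rescale[of "snd z" "\<lambda>s. K (fst z + e * (snd z - s)) s"]
    by (simp add: Dom_def cbox_interval)
  have c2: "continuous_on (Dom c \<times> cbox (0::real) 1)
      (\<lambda>(z, \<sigma>). K (fst z + e * (snd z - snd z * \<sigma>)) (snd z * \<sigma>))"
  proof -
    have "continuous_on (Dom c \<times> cbox (0::real) 1)
      (\<lambda>y. (\<lambda>w. K (fst w) (snd w)) (fst (fst y) + e * (snd (fst y) - snd (fst y) * snd y), snd (fst y) * snd y))"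
    proof (rule continuous_on_compose2[OF K])
      show "continuous_on (Dom c \<times> cbox (0::real) 1)
         (\<lambda>y. (fst (fst y) + e * (snd (fst y) - snd (fst y) * snd y), snd (fst y) * snd y))"
        by (intro continuous_intros)
      show "(\<lambda>y. (fst (fst y) + e * (snd (fst y) - snd (fst y) * snd y), snd (fst y) * snd y)) `
          (Dom c \<times> cbox (0::real) 1) \<subseteq> Dom c"
      proof clarsimp
        fix a b \<sigma> :: real assume ab: "(a, b) \<in> Dom c" and s: "0 \<le> \<sigma>" "\<sigma> \<le> 1"
        have "b * \<sigma> \<in> {0..snd (a,b)}" using ab s by (auto simp: Dom_def mult_right_le_one_le)
        from path_in_Dom[OF ab this e] show "(a + e * (b - b * \<sigma>), b * \<sigma>) \<in> Dom c" by simp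
      qed
    qed
    then show ?thesis by (simp add: case_prod_beta)
  qed
  have "continuous_on (Dom c) (\<lambda>z. snd z * integral (cbox (0::real) 1) (\<lambda>\<sigma>. K (fst z + e * (snd z - snd z * \<sigma>)) (snd z * \<sigma>)))"
    using integral_continuous_on_param[where f="\<lambda>z \<sigma>. K (fst z + e * (snd z - snd z * \<sigma>)) (snd z * \<sigma>)", OF c2]
    by (intro continuous_intros)
  then show ?thesis by (rule continuous_on_eq) (simp add: eq)
qed


definition Gf :: "real \<Rightarrow> real \<Rightarrow> real \<Rightarrow> real" where
  "Gf p \<mu> u = 2 powr (-p) * u powr p - \<mu> / 2 * u"

lemma Gf_factor: "u > 0 \<Longrightarrow> Gf p \<mu> u = u * (2 powr (-p) * u powr (p - 1) - \<mu> / 2)"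
  unfolding Gf_def using powr_mult_base[of u "p - 1"] by (simp add: algebra_simps)

lemma Gf_mono:
  assumes hp: "p > 1" and g: "\<gamma> > 0" and k: "2 powr (-p) * \<gamma> powr (p - 1) > \<mu> / 2"
    and ab: "\<gamma> \<le> a" "a \<le> b"
  shows "Gf p \<mu> a \<le> Gf p \<mu> b" "Gf p \<mu> a > 0"
proof -
  have "\<gamma> powr (p - 1) \<le> a powr (p - 1)" "a powr (p - 1) \<le> b powr (p - 1)"
    using ab g hp by (auto intro!: powr_mono2)
  then have 1: "2 powr (-p) * \<gamma> powr (p - 1) \<le> 2 powr (-p) * a powr (p - 1)"
    and 2: "2 powr (-p) * a powr (p - 1) \<le> 2 powr (-p) * b powr (p - 1)"
    by (auto intro!: mult_left_mono)
  have "a * (2 powr (-p) * a powr (p - 1) - \<mu> / 2) \<le> b * (2 powr (-p) * b powr (p - 1) - \<mu> / 2)"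
  proof (rule mult_mono)
    have "\<mu> / 2 < 2 powr (-p) * a powr (p - 1)" using 1 k by linarith
    then show "0 \<le> 2 powr (-p) * a powr (p - 1) - \<mu> / 2" by simp
  qed (use ab 2 g in auto)
  then show "Gf p \<mu> a \<le> Gf p \<mu> b" using ab g by (simp add: Gf_factor)
  have "\<mu> / 2 < 2 powr (-p) * a powr (p - 1)" using 1 k by linarith
  then have "0 < a * (2 powr (-p) * a powr (p - 1) - \<mu> / 2)" using ab g by (intro mult_pos_pos) auto
  then show "Gf p \<mu> a > 0" using ab g by (simp add: Gf_factor)
qed

lemma Gf_le_nonlin:
  assumes "u > 0" "s \<ge> 0" "\<mu> > 0"
  shows "Gf p \<mu> u \<le> 2 powr (-p) * \<bar>u\<bar> powr p - \<mu> / (1 + s) * (u / 2)"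
proof -
  have "\<mu> / (1 + s) \<le> \<mu>" using assms by (simp add: divide_le_eq)
  then have "\<mu> / (1 + s) * (u / 2) \<le> \<mu> * (u/2)" using assms by (intro mult_right_mono) auto
  then show ?thesis using assms unfolding Gf_def by simp
qed

lemma Gf_cont: "continuous_on S (\<lambda>x. Gf p \<mu> (h x))" if "continuous_on S h" "\<forall>x\<in>S. h x > 0"
  unfolding Gf_def using that by (auto intro!: continuous_intros)

fun Hs :: "real \<Rightarrow> real \<Rightarrow> real \<Rightarrow> nat \<Rightarrow> real \<Rightarrow> real" where
  "Hs p \<mu> \<gamma> 0 = (\<lambda>t. \<gamma>)"
| "Hs p \<mu> \<gamma> (Suc n) = (\<lambda>t. \<gamma> + 2 * integral {0..t} (\<lambda>s. Gf p \<mu> (Hs p \<mu> \<gamma> n s)))"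

lemma Hs_basic:
  assumes hp: "p > 1" and g: "\<gamma> > 0" and k: "2 powr (-p) * \<gamma> powr (p - 1) > \<mu> / 2"
    and c: "c \<ge> 0"
  shows "continuous_on {0..c} (Hs p \<mu> \<gamma> n) \<and> (\<forall>s\<in>{0..c}. Hs p \<mu> \<gamma> n s \<ge> \<gamma>)"
proof (induction n)
  case 0 then show ?case by (auto intro: continuous_intros)
next
  case (Suc n)
  have cG: "continuous_on {0..c} (\<lambda>s. Gf p \<mu> (Hs p \<mu> \<gamma> n s))"
    using Suc g by (intro Gf_cont) auto
  then have iG: "(\<lambda>s. Gf p \<mu> (Hs p \<mu> \<gamma> n s)) integrable_on {0..c}"
    by (rule integrable_continuous_interval)
  have "continuous_on {0..c} (\<lambda>t. \<gamma> + 2 * integral {0..t} (\<lambda>s. Gf p \<mu> (Hs p \<mu> \<gamma> n s)))"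
    by (intro continuous_intros indefinite_integral_continuous_1 iG)
  moreover have "\<gamma> \<le> \<gamma> + 2 * integral {0..t} (\<lambda>s. Gf p \<mu> (Hs p \<mu> \<gamma> n s))" if "t \<in> {0..c}" for t
  proof -
    have "0 \<le> integral {0..t} (\<lambda>s. Gf p \<mu> (Hs p \<mu> \<gamma> n s))"
    proof (rule integral_nonneg)
      show "(\<lambda>s. Gf p \<mu> (Hs p \<mu> \<gamma> n s)) integrable_on {0..t}"
        using that by (intro integrable_continuous_interval continuous_on_subset[OF cG]) auto
      fix s assume "s \<in> {0..t}"
      then show "0 \<le> Gf p \<mu> (Hs p \<mu> \<gamma> n s)"
        using Gf_mono(2)[OF hp g k, of "Hs p \<mu> \<gamma> n s" "Hs p \<mu> \<gamma> n s"] Suc that by auto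
    qed
    then show ?thesis by simp
  qed
  ultimately show ?case by simp
qed


lemma char_plus:
  fixes K :: "real \<Rightarrow> real \<Rightarrow> real"
  assumes K: "continuous_on (Dom c) (\<lambda>w. K (fst w) (snd w))"
  shows "continuous_on (Dom c) (\<lambda>w. integral {0..snd w} (\<lambda>s. K (fst w + snd w - s) s))"
    "z \<in> Dom c \<Longrightarrow> (\<lambda>s. K (fst z + snd z - s) s) integrable_on {0..snd z}"
proof -
  show "continuous_on (Dom c) (\<lambda>w. integral {0..snd w} (\<lambda>s. K (fst w + snd w - s) s))"
    using integral_char_cont[OF K, of 1] by (simp add: algebra_simps)
  assume z: "z \<in> Dom c"
  show "(\<lambda>s. K (fst z + snd z - s) s) integrable_on {0..snd z}"
    using integrable_continuous_interval[OF integrand_cont[OF K z, of 1]] by (simp add: algebra_simps)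
qed

lemma char_minus:
  fixes K :: "real \<Rightarrow> real \<Rightarrow> real"
  assumes K: "continuous_on (Dom c) (\<lambda>w. K (fst w) (snd w))"
  shows "continuous_on (Dom c) (\<lambda>w. integral {0..snd w} (\<lambda>s. K (fst w - snd w + s) s))"
    "z \<in> Dom c \<Longrightarrow> (\<lambda>s. K (fst z - snd z + s) s) integrable_on {0..snd z}"
proof -
  show "continuous_on (Dom c) (\<lambda>w. integral {0..snd w} (\<lambda>s. K (fst w - snd w + s) s))"
    using integral_char_cont[OF K, of "-1"] by (simp add: algebra_simps)
  assume z: "z \<in> Dom c"
  show "(\<lambda>s. K (fst z - snd z + s) s) integrable_on {0..snd z}"
    using integrable_continuous_interval[OF integrand_cont[OF K z, of "-1"]] by (simp add: algebra_simps)
qed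

lemma iter_bounds:
  fixes f g :: "real \<Rightarrow> real"
  assumes hp: "p > 1" and hmu: "\<mu> > 0" and g1: "\<gamma>1 > 0" and g2: "\<gamma>2 > 0"
    and k: "2 powr (-p) * (\<gamma>1 + \<gamma>2) powr (p - 1) > \<mu> / 2"
    and c: "c \<ge> 0"
    and fc: "continuous_on (ball 0 c) f" and gc: "continuous_on (ball 0 c) g"
    and fge: "\<forall>x\<in>ball 0 c. f x \<ge> \<gamma>1" and gge: "\<forall>x\<in>ball 0 c. g x \<ge> \<gamma>2"
  shows "continuous_on (Dom c) (\<lambda>w. fst (iter p \<mu> f g \<gamma>1 \<gamma>2 n) (fst w) (snd w)) \<and>
    continuous_on (Dom c) (\<lambda>w. snd (iter p \<mu> f g \<gamma>1 \<gamma>2 n) (fst w) (snd w)) \<and>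
    (\<forall>w\<in>Dom c. fst (iter p \<mu> f g \<gamma>1 \<gamma>2 n) (fst w) (snd w) \<ge> \<gamma>1 \<and>
       snd (iter p \<mu> f g \<gamma>1 \<gamma>2 n) (fst w) (snd w) \<ge> \<gamma>2 \<and>
       fst (iter p \<mu> f g \<gamma>1 \<gamma>2 n) (fst w) (snd w) + snd (iter p \<mu> f g \<gamma>1 \<gamma>2 n) (fst w) (snd w)
         \<ge> Hs p \<mu> (\<gamma>1 + \<gamma>2) n (snd w))"
proof (induction n)
  case 0
  then show ?case by (auto intro: continuous_intros)
next
  case (Suc n)
  define P where "P = fst (iter p \<mu> f g \<gamma>1 \<gamma>2 n)"
  define Q where "Q = snd (iter p \<mu> f g \<gamma>1 \<gamma>2 n)"
  define N where "N = nonlin p \<mu> P Q"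
  define H where "H = Hs p \<mu> (\<gamma>1 + \<gamma>2) n"
  have g: "\<gamma>1 + \<gamma>2 > 0" using g1 g2 by simp
  have cP: "continuous_on (Dom c) (\<lambda>w. P (fst w) (snd w))"
   and cQ: "continuous_on (Dom c) (\<lambda>w. Q (fst w) (snd w))"
   and lb: "\<And>w. w \<in> Dom c \<Longrightarrow> P (fst w) (snd w) \<ge> \<gamma>1 \<and> Q (fst w) (snd w) \<ge> \<gamma>2 \<and>
        P (fst w) (snd w) + Q (fst w) (snd w) \<ge> H (snd w)"
    using Suc unfolding P_def Q_def H_def by auto
  have HB: "continuous_on {0..c} H" "\<And>s. s \<in> {0..c} \<Longrightarrow> H s \<ge> \<gamma>1 + \<gamma>2"
    using Hs_basic[OF hp g k c, of n] unfolding H_def by auto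
  have eqP: "fst (iter p \<mu> f g \<gamma>1 \<gamma>2 (Suc n)) x t = f (x + t) + integral {0..t} (\<lambda>s. N (x + t - s) s)" for x t
    by (simp add: Let_def P_def Q_def N_def)
  have eqQ: "snd (iter p \<mu> f g \<gamma>1 \<gamma>2 (Suc n)) x t = g (x - t) + integral {0..t} (\<lambda>s. N (x - t + s) s)" for x t
    by (simp add: Let_def P_def Q_def N_def)
  have cN: "continuous_on (Dom c) (\<lambda>w. N (fst w) (snd w))"
    unfolding N_def nonlin_def using cP cQ hp
    by (intro continuous_intros continuous_on_powr') (auto simp: Dom_def)
  have Dsub: "w \<in> Dom c \<Longrightarrow> fst w + snd w \<in> ball 0 c" "w \<in> Dom c \<Longrightarrow> fst w - snd w \<in> ball 0 c" for w
    by (auto simp: Dom_def)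
  have cf: "continuous_on (Dom c) (\<lambda>w. f (fst w + snd w))"
    by (rule continuous_on_compose2[OF fc]) (auto intro!: continuous_intros Dsub)
  have cg: "continuous_on (Dom c) (\<lambda>w. g (fst w - snd w))"
    by (rule continuous_on_compose2[OF gc]) (auto intro!: continuous_intros Dsub)
  have c1: "continuous_on (Dom c) (\<lambda>w. fst (iter p \<mu> f g \<gamma>1 \<gamma>2 (Suc n)) (fst w) (snd w))"
    unfolding eqP by (intro continuous_intros cf char_plus(1)[OF cN])
  have c2: "continuous_on (Dom c) (\<lambda>w. snd (iter p \<mu> f g \<gamma>1 \<gamma>2 (Suc n)) (fst w) (snd w))"
    unfolding eqQ by (intro continuous_intros cg char_minus(1)[OF cN])
  have bounds: "fst (iter p \<mu> f g \<gamma>1 \<gamma>2 (Suc n)) (fst w) (snd w) \<ge> \<gamma>1 \<and>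
       snd (iter p \<mu> f g \<gamma>1 \<gamma>2 (Suc n)) (fst w) (snd w) \<ge> \<gamma>2 \<and>
       fst (iter p \<mu> f g \<gamma>1 \<gamma>2 (Suc n)) (fst w) (snd w) + snd (iter p \<mu> f g \<gamma>1 \<gamma>2 (Suc n)) (fst w) (snd w)
         \<ge> Hs p \<mu> (\<gamma>1 + \<gamma>2) (Suc n) (snd w)" if w: "w \<in> Dom c" for w
  proof -
    obtain x t where xt: "w = (x, t)" by (cases w)
    have t: "0 \<le> t" "t < c" using w xt by (auto simp: Dom_def)
    have iGH: "(\<lambda>s. Gf p \<mu> (H s)) integrable_on {0..t}"
    proof (intro integrable_continuous_interval Gf_cont continuous_on_subset[OF HB(1)] ballI)
      fix s assume "s \<in> {0..t}"
      then have "s \<in> {0..c}" using t by auto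
      then show "0 < H s" using HB(2) g by (meson less_le_trans)
    qed (use t in auto)
    have I0: "0 \<le> integral {0..t} (\<lambda>s. Gf p \<mu> (H s))"
    proof (rule integral_nonneg[OF iGH])
      fix s assume "s \<in> {0..t}"
      then have "s \<in> {0..c}" using t by auto
      then show "0 \<le> Gf p \<mu> (H s)" using Gf_mono(2)[OF hp g k HB(2), of s "H s"] by auto
    qed
    have pt: "(x + e * (t - s), s) \<in> Dom c" if "s \<in> {0..t}" "\<bar>e\<bar> \<le> 1" for s e
      using path_in_Dom[OF w, of s e] that xt by auto
    have Nge: "Gf p \<mu> (H s) \<le> N y s" if "(y, s) \<in> Dom c" for y s
    proof -
      have s: "s \<in> {0..c}" using that by (auto simp: Dom_def)
      have u: "H s \<le> P y s + Q y s" "\<gamma>1 + \<gamma>2 \<le> H s" using lb[OF that] HB(2)[OF s] by auto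
      have "Gf p \<mu> (H s) \<le> Gf p \<mu> (P y s + Q y s)" using Gf_mono(1)[OF hp g k u(2) u(1)] .
      also have "\<dots> \<le> N y s" unfolding N_def nonlin_def
        using Gf_le_nonlin[of "P y s + Q y s" s \<mu> p] u s g hmu by auto
      finally show ?thesis .
    qed
    have IP: "integral {0..t} (\<lambda>s. Gf p \<mu> (H s)) \<le> integral {0..t} (\<lambda>s. N (x + t - s) s)"
    proof (rule integral_le[OF iGH])
      show "(\<lambda>s. N (x + t - s) s) integrable_on {0..t}" using char_plus(2)[OF cN w] xt by simp
      fix s assume s: "s \<in> {0..t}"
      show "Gf p \<mu> (H s) \<le> N (x + t - s) s" using Nge pt[OF s, of 1] by (simp add: algebra_simps)
    qed
    have IQ: "integral {0..t} (\<lambda>s. Gf p \<mu> (H s)) \<le> integral {0..t} (\<lambda>s. N (x - t + s) s)"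
    proof (rule integral_le[OF iGH])
      show "(\<lambda>s. N (x - t + s) s) integrable_on {0..t}" using char_minus(2)[OF cN w] xt by simp
      fix s assume s: "s \<in> {0..t}"
      show "Gf p \<mu> (H s) \<le> N (x - t + s) s" using Nge pt[OF s, of "-1"] by (simp add: algebra_simps)
    qed
    have fx: "f (x + t) \<ge> \<gamma>1" "g (x - t) \<ge> \<gamma>2" using fge gge Dsub[OF w] xt by auto
    show ?thesis unfolding xt eqP eqQ using IP IQ I0 fx by (simp add: H_def)
  qed
  show ?case using c1 c2 bounds by blast
qed


lemma Hs_blowup:
  assumes hp: "p > 1" and hmu: "\<mu> > 0" and g: "\<gamma> > 0"
    and k: "2 powr (-p) * \<gamma> powr (p - 1) > \<mu> / 2"
    and hC: "\<gamma> powr (1 - p) < 2 powr (1 - p) / \<mu>"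
    and T: "1 / ((p - 1) * \<mu>) * ln ((2 powr (1 - p) / \<mu>) / (2 powr (1 - p) / \<mu> - \<gamma> powr (1 - p))) < \<tau>"
    and B: "\<And>n. Hs p \<mu> \<gamma> n \<tau> \<le> B"
  shows False
proof -
  define C where "C = 2 powr (1 - p) / \<mu>"
  define R where "R = C / (C - \<gamma> powr (1 - p))"
  define T1 where "T1 = 1 / ((p - 1) * \<mu>) * ln R"
  have gp: "\<gamma> powr (1 - p) > 0" using g by simp
  have hC': "\<gamma> powr (1 - p) < C" using hC unfolding C_def .
  have R1: "R > 1" unfolding R_def using hC' gp by (subst less_divide_eq) auto
  have T1pos: "T1 > 0" using R1 hp hmu unfolding T1_def by (simp add: ln_gt_zero)
  have T1tau: "T1 < \<tau>" using T unfolding T1_def R_def C_def .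
  have tau: "\<tau> \<ge> 0" using T1pos T1tau by simp
  let ?H = "Hs p \<mu> \<gamma>"
  have HB: "continuous_on {0..\<tau>} (?H n)" "\<And>s. s \<in> {0..\<tau>} \<Longrightarrow> ?H n s \<ge> \<gamma>" for n
    using Hs_basic[OF hp g k tau, of n] by auto
  have iG: "(\<lambda>s. Gf p \<mu> (?H n s)) integrable_on {a..b}" if "0 \<le> a" "b \<le> \<tau>" for n a b
  proof (intro integrable_continuous_interval Gf_cont continuous_on_subset[OF HB(1)] ballI)
    fix s assume "s \<in> {a..b}"
    then have "s \<in> {0..\<tau>}" using that by auto
    then show "0 < ?H n s" using HB(2) g by (meson less_le_trans)
  qed (use that in auto)
  have iGnn: "0 \<le> integral {a..b} (\<lambda>s. Gf p \<mu> (?H n s))" if "0 \<le> a" "b \<le> \<tau>" for n a b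
  proof (rule integral_nonneg[OF iG[OF that]])
    fix s assume "s \<in> {a..b}"
    then have "s \<in> {0..\<tau>}" using that by auto
    then have "\<gamma> \<le> ?H n s" by (rule HB(2))
    then show "0 \<le> Gf p \<mu> (?H n s)" using Gf_mono(2)[OF hp g k _ order_refl] by (meson less_imp_le)
  qed
  have mono_n: "\<forall>s\<in>{0..\<tau>}. ?H n s \<le> ?H (Suc n) s" for n
  proof (induction n)
    case 0
    show ?case
    proof
      fix t assume "t \<in> {0..\<tau>}"
      then have "0 \<le> integral {0..t} (\<lambda>s. Gf p \<mu> (?H 0 s))" by (intro iGnn) auto
      moreover have "?H 0 t = \<gamma>" by simp
      ultimately show "?H 0 t \<le> ?H (Suc 0) t" by (simp only: Hs.simps(2))
    qed
  next
    case (Suc n)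
    show ?case
    proof
      fix t assume t: "t \<in> {0..\<tau>}"
      have "integral {0..t} (\<lambda>s. Gf p \<mu> (?H n s)) \<le> integral {0..t} (\<lambda>s. Gf p \<mu> (?H (Suc n) s))"
      proof (rule integral_le[OF iG iG])
        fix s assume "s \<in> {0..t}"
        then have s: "s \<in> {0..\<tau>}" using t by auto
        show "Gf p \<mu> (?H n s) \<le> Gf p \<mu> (?H (Suc n) s)"
          using Gf_mono(1)[OF hp g k HB(2)[OF s]] Suc s by blast
      qed (use t in auto)
      then show "?H (Suc n) t \<le> ?H (Suc (Suc n)) t" by simp
    qed
  qed
  have mono_t: "?H n s \<le> ?H n t" if "0 \<le> s" "s \<le> t" "t \<le> \<tau>" for n s t
  proof (cases n)
    case 0 then show ?thesis by simp
  next
    case (Suc m)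
    have "integral {0..s} (\<lambda>s. Gf p \<mu> (?H m s)) + integral {s..t} (\<lambda>s. Gf p \<mu> (?H m s))
        = integral {0..t} (\<lambda>s. Gf p \<mu> (?H m s))"
      using that by (intro Henstock_Kurzweil_Integration.integral_combine iG) auto
    moreover have "0 \<le> integral {s..t} (\<lambda>s. Gf p \<mu> (?H m s))" using that by (intro iGnn) auto
    ultimately show ?thesis using Suc by simp
  qed
  have Hle: "?H n s \<le> B" if "s \<in> {0..\<tau>}" for n s
    using mono_t[of s \<tau> n] B[of n] that by auto
  define L where "L s = (SUP n. ?H n s)" for s
  have inc: "incseq (\<lambda>n. ?H n s)" if "s \<in> {0..\<tau>}" for s
    using mono_n that by (intro incseq_SucI) auto
  have conv: "(\<lambda>n. ?H n s) \<longlonglongrightarrow> L s" if "s \<in> {0..\<tau>}" for s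
    unfolding L_def using Hle[OF that] inc[OF that]
    by (intro LIMSEQ_incseq_SUP) (auto intro!: bdd_aboveI2[where M=B])
  have Lge: "?H n s \<le> L s" if "s \<in> {0..\<tau>}" for n s
    using incseq_le[OF inc[OF that] conv[OF that]] .
  have LgeG: "\<gamma> \<le> L s" if "s \<in> {0..\<tau>}" for s using Lge[OF that, of 0] by simp
  have Lpos: "0 < L s" if "s \<in> {0..\<tau>}" for s using LgeG[OF that] g by simp
  have MCT: "(\<lambda>s. Gf p \<mu> (L s)) integrable_on {0..t} \<and>
      ((\<lambda>n. integral {0..t} (\<lambda>s. Gf p \<mu> (?H n s))) \<longlonglongrightarrow> integral {0..t} (\<lambda>s. Gf p \<mu> (L s)))"
    if t: "t \<in> {0..\<tau>}" for t
  proof (rule monotone_convergence_increasing)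
    show "(\<lambda>s. Gf p \<mu> (?H n s)) integrable_on {0..t}" for n using t by (intro iG) auto
    fix n s assume s: "s \<in> {0..t}"
    then have s': "s \<in> {0..\<tau>}" using t by auto
    show "Gf p \<mu> (?H n s) \<le> Gf p \<mu> (?H (Suc n) s)"
      using Gf_mono(1)[OF hp g k HB(2)[OF s']] mono_n s' by blast
  next
    fix s assume s: "s \<in> {0..t}"
    then have s': "s \<in> {0..\<tau>}" using t by auto
    show "(\<lambda>n. Gf p \<mu> (?H n s)) \<longlonglongrightarrow> Gf p \<mu> (L s)"
      unfolding Gf_def using conv[OF s'] Lpos[OF s'] by (intro tendsto_intros) auto
  next
    have "\<bar>integral {0..t} (\<lambda>s. Gf p \<mu> (?H n s))\<bar> \<le> integral {0..t} (\<lambda>s. Gf p \<mu> B)" for n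
    proof -
      have "integral {0..t} (\<lambda>s. Gf p \<mu> (?H n s)) \<le> integral {0..t} (\<lambda>s. Gf p \<mu> B)"
      proof (rule integral_le[OF iG])
        fix s assume s: "s \<in> {0..t}"
        then have s': "s \<in> {0..\<tau>}" using t by auto
        show "Gf p \<mu> (?H n s) \<le> Gf p \<mu> B" using Gf_mono(1)[OF hp g k HB(2)[OF s'] Hle[OF s']] .
      qed (use t in auto)
      moreover have "0 \<le> integral {0..t} (\<lambda>s. Gf p \<mu> (?H n s))" using t by (intro iGnn) auto
      ultimately show ?thesis by simp
    qed
    then show "bounded (range (\<lambda>n. integral {0..t} (\<lambda>s. Gf p \<mu> (?H n s))))"
      unfolding bounded_real by blast
  qed
  have Leq: "L t = \<gamma> + 2 * integral {0..t} (\<lambda>s. Gf p \<mu> (L s))" if t: "t \<in> {0..\<tau>}" for t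
  proof -
    have "(\<lambda>n. ?H (Suc n) t) \<longlonglongrightarrow> L t" using LIMSEQ_Suc[OF conv[OF t]] .
    moreover have "(\<lambda>n. ?H (Suc n) t) \<longlonglongrightarrow> \<gamma> + 2 * integral {0..t} (\<lambda>s. Gf p \<mu> (L s))"
      using MCT[OF t] by (simp del: Hs.simps(1) add: Hs.simps(2)) (intro tendsto_intros, auto)
    ultimately show ?thesis by (rule LIMSEQ_unique)
  qed
  define M where "M t = \<gamma> + 2 * integral {0..t} (\<lambda>s. Gf p \<mu> (L s))" for t
  have iGL: "(\<lambda>s. Gf p \<mu> (L s)) integrable_on {0..\<tau>}" using MCT[of \<tau>] tau by auto
  have cM: "continuous_on {0..\<tau>} M" unfolding M_def
    by (intro continuous_intros indefinite_integral_continuous_1 iGL)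
  have cL: "continuous_on {0..\<tau>} L" using cM by (rule continuous_on_eq) (simp add: Leq M_def)
  have cGL: "continuous_on {0..\<tau>} (\<lambda>s. Gf p \<mu> (L s))" using cL Lpos by (intro Gf_cont) auto
  have LM: "L t = M t" if "t \<in> {0..\<tau>}" for t using Leq[OF that] M_def by simp
  define E where "E t = (M t powr (1 - p) - C) * exp (- ((p - 1) * \<mu>) * t)" for t
  have dE: "(E has_real_derivative 0) (at t within {0..\<tau>})" if t: "t \<in> {0..\<tau>}" for t
  proof -
    have mpos: "M t > 0" using Lpos[OF t] LM[OF t] by simp
    have dI: "((\<lambda>u. integral {0..u} (\<lambda>s. Gf p \<mu> (L s))) has_real_derivative Gf p \<mu> (L t)) (at t within {0..\<tau>})"
      by (rule integral_has_real_derivative[OF cGL t])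
    have dM: "(M has_real_derivative 2 * Gf p \<mu> (L t)) (at t within {0..\<tau>})"
      unfolding M_def by (auto intro!: derivative_eq_intros dI)
    have dw: "((\<lambda>t. M t powr (1 - p)) has_real_derivative ((1 - p) * M t powr (1 - p - 1)) * (2 * Gf p \<mu> (L t))) (at t within {0..\<tau>})"
      by (rule DERIV_chain'[OF dM has_real_derivative_powr[OF mpos]])
    have dE': "(E has_real_derivative
        ((1 - p) * M t powr (1 - p - 1)) * (2 * Gf p \<mu> (L t)) * exp (- ((p - 1) * \<mu>) * t)
        + (M t powr (1 - p) - C) * (exp (- ((p - 1) * \<mu>) * t) * (- ((p - 1) * \<mu>)))) (at t within {0..\<tau>})"
    proof -
      have d2: "((\<lambda>t. exp (- ((p - 1) * \<mu>) * t)) has_real_derivative exp (- ((p - 1) * \<mu>) * t) * (- ((p - 1) * \<mu>))) (at t within {0..\<tau>})"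
        by (auto intro!: derivative_eq_intros)
      have d1: "((\<lambda>t. M t powr (1 - p) - C) has_real_derivative ((1 - p) * M t powr (1 - p - 1)) * (2 * Gf p \<mu> (L t)) - 0) (at t within {0..\<tau>})"
        by (rule DERIV_diff[OF dw DERIV_const])
      show ?thesis using DERIV_mult'[OF d1 d2] unfolding E_def by (simp add: algebra_simps)
    qed
    define m where "m = M t"
    have e1: "m powr (1 - p - 1) * m powr p = 1" using mpos unfolding m_def
      by (simp add: powr_add[symmetric])
    have e2: "m powr (1 - p - 1) * m = m powr (1 - p)" using mpos unfolding m_def
      using powr_mult_base[of "M t" "-p"] by (simp add: mult.commute)
    have e3: "2 * 2 powr (-p) = 2 powr (1 - p)" by (simp add: powr_add[symmetric] powr_mult_base)
    have "(1 - p) * m powr (1 - p - 1) * (2 * Gf p \<mu> m)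
        = (1 - p) * (2 * 2 powr (-p) * (m powr (1 - p - 1) * m powr p) - \<mu> * (m powr (1 - p - 1) * m))"
      unfolding Gf_def by (simp add: algebra_simps)
    also have "\<dots> = (1 - p) * (2 powr (1 - p) - \<mu> * m powr (1 - p))" using e1 e2 e3 by simp
    finally have w: "(1 - p) * m powr (1 - p - 1) * (2 * Gf p \<mu> m) = (1 - p) * (2 powr (1 - p) - \<mu> * m powr (1 - p))" .
    have "((1 - p) * M t powr (1 - p - 1)) * (2 * Gf p \<mu> (L t)) * exp (- ((p - 1) * \<mu>) * t)
        + (M t powr (1 - p) - C) * (exp (- ((p - 1) * \<mu>) * t) * (- ((p - 1) * \<mu>)))
      = exp (- ((p - 1) * \<mu>) * t) * ((1 - p) * m powr (1 - p - 1) * (2 * Gf p \<mu> m) + (m powr (1 - p) - C) * (- ((p - 1) * \<mu>)))"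
      using LM[OF t] unfolding m_def by (simp add: algebra_simps)
    also have "\<dots> = exp (- ((p - 1) * \<mu>) * t) * ((1 - p) * (2 powr (1 - p) - \<mu> * m powr (1 - p)) + (m powr (1 - p) - C) * (- ((p - 1) * \<mu>)))"
      by (simp only: w)
    also have "\<dots> = exp (- ((p - 1) * \<mu>) * t) * ((1 - p) * (2 powr (1 - p) - \<mu> * C))"
      by (simp add: algebra_simps)
    also have "\<dots> = 0" using hmu unfolding C_def by simp
    finally have X: "((1 - p) * M t powr (1 - p - 1)) * (2 * Gf p \<mu> (L t)) * exp (- ((p - 1) * \<mu>) * t)
        + (M t powr (1 - p) - C) * (exp (- ((p - 1) * \<mu>) * t) * (- ((p - 1) * \<mu>))) = 0" .
    show ?thesis using dE'[unfolded X] .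
  qed
  obtain c0 where c0: "\<And>x. x \<in> {0..\<tau>} \<Longrightarrow> E x = c0"
    using has_field_derivative_zero_constant[of "{0..\<tau>}" E] dE by auto
  have "E T1 = E 0" using c0[of T1] c0[of 0] T1pos T1tau tau by auto
  then have eq: "(M T1 powr (1 - p) - C) * exp (- ((p - 1) * \<mu>) * T1) = \<gamma> powr (1 - p) - C"
    unfolding E_def M_def by simp
  have "exp ((p - 1) * \<mu> * T1) = R" using R1 hp hmu unfolding T1_def by simp
  moreover have "exp (- ((p - 1) * \<mu>) * T1) = inverse (exp ((p - 1) * \<mu> * T1))"
    by (simp add: exp_minus[symmetric])
  ultimately have "exp (- ((p - 1) * \<mu>) * T1) = 1 / R" by (simp add: divide_inverse)
  then have "(M T1 powr (1 - p) - C) / R = \<gamma> powr (1 - p) - C" using eq by simp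
  then have "M T1 powr (1 - p) - C = (\<gamma> powr (1 - p) - C) * R" using R1 by (simp add: divide_eq_eq)
  also have "\<dots> = - C" unfolding R_def using hC' gp by (simp add: field_simps)
  finally have "M T1 powr (1 - p) = 0" by simp
  moreover have "M T1 > 0" using Lpos[of T1] LM[of T1] T1pos T1tau by auto
  ultimately show False by simp
qed


lemma Ck_cont:
  assumes "Ck_on k S f"
  shows "continuous_on S f"
proof -
  obtain D where D0: "\<forall>x\<in>S. D 0 x = f x"
    and Dd: "\<forall>j<k. \<forall>x\<in>S. (D j has_real_derivative D (Suc j) x) (at x within S)"
    and Dk: "continuous_on S (D k)"
    using assms unfolding Ck_on_def by blast
  have "continuous_on S (D 0)"
  proof (cases "k = 0")
    case True then show ?thesis using Dk by simp
  next
    case False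
    then have "\<forall>x\<in>S. (D 0 has_real_derivative D (Suc 0) x) (at x within S)" using Dd by auto
    then show ?thesis
      unfolding continuous_on_eq_continuous_within using DERIV_continuous by blast
  qed
  then show ?thesis by (rule continuous_on_eq) (use D0 in auto)
qed

theorem lemma4p4:
  fixes p \<mu> Rs Ts \<gamma>1 \<gamma>2 \<epsilon>0 :: real and f g :: "real \<Rightarrow> real"
  assumes hp: "p > 1" and hmu: "\<mu> > 0" and hpmu: "p < 1 + 2 / \<mu>"
    and hR: "Rs > 0" and hT: "Ts > 0"
    and hg1: "\<gamma>1 > 0" and hg2: "\<gamma>2 > 0"
    and hgam1: "\<gamma>1 + \<gamma>2 > 1"
    and hgam2: "\<gamma>1 + \<gamma>2 > (\<mu> * p * 2 powr p) powr (1 / (p - 1))"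
    and A1: "T1 p \<mu> \<gamma>1 \<gamma>2 < Ts"
    and A2: "\<forall>x\<in>ball 0 (Rs + Ts). f x \<ge> \<gamma>1 \<and> g x \<ge> \<gamma>2"
    and A3: "Ck_on 4 (cball 0 (Rs + Ts)) f" "Ck_on 4 (cball 0 (Rs + Ts)) g"
    and A4: "\<epsilon>0 > 0"
      "\<forall>x\<in>ball 0 (Rs + Ts). 2 powr (-p) * (\<gamma>1 + \<gamma>2) powr p - \<mu> / 2 * (\<gamma>1 + \<gamma>2)
          \<ge> (2 + \<epsilon>0) * (\<bar>deriv f x\<bar> + \<bar>deriv g x\<bar>)"
  shows "\<forall>x\<in>ball 0 Rs. blowup_time Rs Ts p \<mu> f g \<gamma>1 \<gamma>2 x < ereal Ts"
proof
  fix x :: real assume x: "x \<in> ball 0 Rs"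
  define \<gamma> where "\<gamma> = \<gamma>1 + \<gamma>2"
  define c where "c = Rs + Ts"
  have g: "\<gamma> > 0" using hg1 hg2 \<gamma>_def by simp
  have c: "c \<ge> 0" using hR hT c_def by simp
  have a0: "\<mu> * p * 2 powr p > 0" using hmu hp by simp
  have "((\<mu> * p * 2 powr p) powr (1 / (p - 1))) powr (p - 1) < \<gamma> powr (p - 1)"
    using hgam2 hp unfolding \<gamma>_def by (intro powr_less_mono2) auto
  moreover have "((\<mu> * p * 2 powr p) powr (1 / (p - 1))) powr (p - 1) = \<mu> * p * 2 powr p"
    using hp a0 by (simp add: powr_powr)
  ultimately have gbig: "\<gamma> powr (p - 1) > \<mu> * p * 2 powr p" by simp
  have two: "2 powr (-p) * 2 powr p = 1" by (simp add: powr_add[symmetric])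
  have "2 powr (-p) * \<gamma> powr (p - 1) > 2 powr (-p) * (\<mu> * p * 2 powr p)"
    using gbig by simp
  also have "2 powr (-p) * (\<mu> * p * 2 powr p) = \<mu> * p" using two by (simp add: algebra_simps)
  finally have k0: "2 powr (-p) * \<gamma> powr (p - 1) > \<mu> * p" .
  have "\<mu> * p > \<mu> / 2" using hmu hp by (simp add: field_simps)
  then have k: "2 powr (-p) * \<gamma> powr (p - 1) > \<mu> / 2" using k0 by linarith
  have hC: "\<gamma> powr (1 - p) < 2 powr (1 - p) / \<mu>"
  proof -
    have gpp: "\<gamma> powr (p - 1) > 0" using g by simp
    have e1: "\<gamma> powr (1 - p) = 1 / \<gamma> powr (p - 1)"
      using powr_minus_divide[of \<gamma> "p - 1"] by simp
    have e2: "2 powr (1 - p) = 2 * 2 powr (-p)" by (simp add: powr_add[symmetric] powr_mult_base)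
    have "\<mu> / 2 < \<mu> * p" using hmu hp by (simp add: field_simps)
    then have "\<mu> / 2 < 2 powr (-p) * \<gamma> powr (p - 1)" using k0 by linarith
    then have "\<mu> < 2 * 2 powr (-p) * \<gamma> powr (p - 1)" by simp
    then have "1 / \<gamma> powr (p - 1) < 2 * 2 powr (-p) / \<mu>"
      using gpp hmu by (simp add: field_simps)
    then show ?thesis using e1 e2 by simp
  qed
  have fc: "continuous_on (ball 0 c) f"
    using continuous_on_subset[OF Ck_cont[OF A3(1)]] c_def by auto
  have gc: "continuous_on (ball 0 c) g"
    using continuous_on_subset[OF Ck_cont[OF A3(2)]] c_def by auto
  have fge: "\<forall>x\<in>ball 0 c. f x \<ge> \<gamma>1" and gge: "\<forall>x\<in>ball 0 c. g x \<ge> \<gamma>2"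
    using A2 c_def by auto
  note IB = iter_bounds[OF hp hmu hg1 hg2 k[unfolded \<gamma>_def] c fc gc fge gge]
  define \<tau> where "\<tau> = max ((T1 p \<mu> \<gamma>1 \<gamma>2 + Ts) / 2) (Ts / 2)"
  have tau: "T1 p \<mu> \<gamma>1 \<gamma>2 < \<tau>" "\<tau> < Ts" "0 < \<tau>"
  proof -
    have "(T1 p \<mu> \<gamma>1 \<gamma>2 + Ts) / 2 \<le> \<tau>" "Ts / 2 \<le> \<tau>" unfolding \<tau>_def by auto
    moreover have "\<tau> < Ts" unfolding \<tau>_def using A1 hT by auto
    ultimately show "T1 p \<mu> \<gamma>1 \<gamma>2 < \<tau>" "\<tau> < Ts" "0 < \<tau>" using A1 hT by (auto simp: field_simps)
  qed
  have xD: "(x, \<tau>) \<in> Dom c" using x tau unfolding Dom_def c_def by auto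
  have notfin: False if fin: "phi_lim p \<mu> f g \<gamma>1 \<gamma>2 x \<tau> + psi_lim p \<mu> f g \<gamma>1 \<gamma>2 x \<tau> < \<infinity>"
  proof -
    define S0 where "S0 = phi_lim p \<mu> f g \<gamma>1 \<gamma>2 x \<tau> + psi_lim p \<mu> f g \<gamma>1 \<gamma>2 x \<tau>"
    have le: "ereal (Hs p \<mu> \<gamma> n \<tau>) \<le> S0" for n
    proof -
      have "Hs p \<mu> \<gamma> n \<tau> \<le> fst (iter p \<mu> f g \<gamma>1 \<gamma>2 n) x \<tau> + snd (iter p \<mu> f g \<gamma>1 \<gamma>2 n) x \<tau>"
        using IB[of n] xD unfolding \<gamma>_def by auto
      then have "ereal (Hs p \<mu> \<gamma> n \<tau>) \<le> ereal (fst (iter p \<mu> f g \<gamma>1 \<gamma>2 n) x \<tau>) + ereal (snd (iter p \<mu> f g \<gamma>1 \<gamma>2 n) x \<tau>)"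
        by simp
      also have "\<dots> \<le> S0" unfolding S0_def phi_lim_def psi_lim_def
        by (intro add_mono SUP_upper) auto
      finally show ?thesis .
    qed
    have "S0 \<noteq> \<infinity>" using fin S0_def by simp
    moreover have "S0 \<noteq> -\<infinity>" using le[of 0] by auto
    ultimately obtain B where B: "S0 = ereal B" by (cases S0) auto
    have "Hs p \<mu> \<gamma> n \<tau> \<le> B" for n using le[of n] B by simp
    then show False
      using Hs_blowup[OF hp hmu g k hC _ ] tau(1) unfolding T1_def \<gamma>_def by blast
  qed
  have "blowup_time Rs Ts p \<mu> f g \<gamma>1 \<gamma>2 x \<le> ereal \<tau>"
    unfolding blowup_time_def
  proof (rule Sup_least)
    fix y assume "y \<in> ereal ` {t. t > 0 \<and> (\<forall>\<tau>'. 0 < \<tau>' \<and> \<tau>' < t \<longrightarrow>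
          (x, \<tau>') \<in> coneK Rs Ts \<and>
          phi_lim p \<mu> f g \<gamma>1 \<gamma>2 x \<tau>' + psi_lim p \<mu> f g \<gamma>1 \<gamma>2 x \<tau>' < \<infinity>)}"
    then obtain t where y: "y = ereal t" and H: "\<forall>\<tau>'. 0 < \<tau>' \<and> \<tau>' < t \<longrightarrow>
          (x, \<tau>') \<in> coneK Rs Ts \<and>
          phi_lim p \<mu> f g \<gamma>1 \<gamma>2 x \<tau>' + psi_lim p \<mu> f g \<gamma>1 \<gamma>2 x \<tau>' < \<infinity>"
      by blast
    have "t \<le> \<tau>"
    proof (rule ccontr)
      assume "\<not> t \<le> \<tau>"
      then show False using H tau notfin by auto
    qed
    then show "y \<le> ereal \<tau>" using y by simp
  qed
  also have "\<dots> < ereal Ts" using tau by simp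
  finally show "blowup_time Rs Ts p \<mu> f g \<gamma>1 \<gamma>2 x < ereal Ts" .
qed

end
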